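(* There is no semi-equivelar map of type $(4^3,6)$ (three quadrilaterals and one hexagon around each vertex) on the closed surface of Euler characteristic $-1$. *)

theory Defs
  imports Main
begin

text \<open>A (finite, 2-dimensional) map is given combinatorially by its set of faces.
  Each face is a polygon, represented by the cyclic list of its (distinct) vertices.\<close>

definition face_edges :: "'a list \<Rightarrow> 'a set set" where
  "face_edges f = {{f ! i, f ! (Suc i mod length f)} | i. i < length f}"

definition map_verts :: "'a list set \<Rightarrow> 'a set" where
  "map_verts F = (\<Union>f\<in>F. set f)"

definition map_edges :: "'a list set \<Rightarrow> 'a set set" where
  "map_edges F = (\<Union>f\<in>F. face_edges f)"

definition faces_at :: "'a list set \<Rightarrow> 'a \<Rightarrow> 'a list set" where
  "faces_at F v = {f\<in>F. v \<in> set f}"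

definition face_cycle :: "'a list set \<Rightarrow> 'a \<Rightarrow> 'a list list \<Rightarrow> bool" where
  "face_cycle F v fs \<longleftrightarrow>
     distinct fs \<and> length fs \<ge> 3 \<and> set fs = faces_at F v \<and>
     (\<forall>i<length fs. \<exists>e. v \<in> e \<and>
        e \<in> face_edges (fs ! i) \<and> e \<in> face_edges (fs ! (Suc i mod length fs)))"

text \<open>Polyhedral map on a closed (connected) surface: faces are polygons
  (at least 3 distinct vertices), two distinct faces meet in the empty set,
  a vertex or an edge, every edge lies in exactly two faces, the faces around
  every vertex form a single cycle (so the link of each vertex is a circle),
  and the edge graph is connected.\<close>
definition polyhedral_map :: "'a list set \<Rightarrow> bool" where
  "polyhedral_map F \<longleftrightarrow>
     finite F \<and> F \<noteq> {} \<and>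
     (\<forall>f\<in>F. distinct f \<and> length f \<ge> 3) \<and>
     (\<forall>f\<in>F. \<forall>g\<in>F. f \<noteq> g \<longrightarrow>
        set f \<inter> set g = {} \<or> card (set f \<inter> set g) = 1 \<or>
        set f \<inter> set g \<in> face_edges f \<inter> face_edges g) \<and>
     (\<forall>e\<in>map_edges F. card {f\<in>F. e \<in> face_edges f} = 2) \<and>
     (\<forall>v\<in>map_verts F. \<exists>fs. face_cycle F v fs) \<and>
     (\<forall>u\<in>map_verts F. \<forall>w\<in>map_verts F.
        (u, w) \<in> {(x, y). {x, y} \<in> map_edges F}\<^sup>*)"

definition euler_char :: "'a list set \<Rightarrow> int" where
  "euler_char F = int (card (map_verts F)) - int (card (map_edges F)) + int (card F)"

definition semi_equivelar_4_3_6 :: "'a list set \<Rightarrow> bool" where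
  "semi_equivelar_4_3_6 F \<longleftrightarrow> polyhedral_map F \<and>
     (\<forall>v\<in>map_verts F. \<exists>fs. face_cycle F v fs \<and> map length fs = [4, 4, 4, 6])"

end

theory Submission
  imports Defs
begin


lemma face_edges_image:
  "face_edges f = (\<lambda>i. {f ! i, f ! (Suc i mod length f)}) ` {..<length f}"
  by (auto simp: face_edges_def)

lemma finite_face_edges: "finite (face_edges f)"
  by (simp add: face_edges_image)

lemma card_face_edges_le: "card (face_edges f) \<le> length f"
  unfolding face_edges_image using card_image_le[of "{..<length f}"] by simp

lemma mod_aux:
  assumes "i = Suc j mod n" "j = Suc i mod n" "i < n" "j < n" "n \<ge> 3"
  shows False
proof -
  have b: "Suc i mod n = (if Suc i = n then 0 else Suc i)"
    using assms(3) by (cases "Suc i = n") auto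
  have c: "Suc j mod n = (if Suc j = n then 0 else Suc j)"
    using assms(4) by (cases "Suc j = n") auto
  have i: "i = (if Suc j = n then 0 else Suc j)" using assms(1) c by argo
  have j: "j = (if Suc i = n then 0 else Suc i)" using assms(2) b by argo
  show False
  proof (cases "Suc j = n")
    case T1: True
    have i0: "i = 0" using i by (simp only: if_P[OF T1])
    show False
    proof (cases "Suc i = n")
      case True then show False using i0 assms(5) by linarith
    next
      case False
      have "j = Suc i" using j by (simp only: if_not_P[OF False])
      then show False using i0 T1 assms(5) by linarith
    qed
  next
    case F1: False
    have i1: "i = Suc j" using i by (simp only: if_not_P[OF F1])
    show False
    proof (cases "Suc i = n")
      case True
      have "j = 0" using j by (simp only: if_P[OF True])
      then show False using i1 True assms(5) by linarith
    next
      case False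
      have "j = Suc i" using j by (simp only: if_not_P[OF False])
      then show False using i1 by linarith
    qed
  qed
qed

lemma card_face_edges:
  assumes "distinct f" "length f \<ge> 3"
  shows "card (face_edges f) = length f"
proof -
  have "inj_on (\<lambda>i. {f ! i, f ! (Suc i mod length f)}) {..<length f}"
  proof (rule inj_onI)
    fix i j assume i: "i \<in> {..<length f}" and j: "j \<in> {..<length f}"
      and eq: "{f ! i, f ! (Suc i mod length f)} = {f ! j, f ! (Suc j mod length f)}"
    have pos: "0 < length f" using assms(2) by linarith
    have si: "Suc i mod length f < length f" using pos by (rule mod_less_divisor)
    have sj: "Suc j mod length f < length f" using pos by (rule mod_less_divisor)
    show "i = j"
    proof (cases "f ! i = f ! j")
      case True then show ?thesis using i j assms nth_eq_iff_index_eq by auto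
    next
      case False
      then have "f ! i = f ! (Suc j mod length f)" "f ! (Suc i mod length f) = f ! j"
        using eq by (auto simp: doubleton_eq_iff)
      then have h1: "i = Suc j mod length f" and h2: "j = Suc i mod length f"
        using i j si sj assms(1) nth_eq_iff_index_eq by (metis lessThan_iff)+
      have "i < length f" "j < length f" using i j by auto
      then show ?thesis using mod_aux[OF h1 h2 _ _ assms(2)] by blast
    qed
  qed
  then show ?thesis unfolding face_edges_image by (simp add: card_image)
qed

lemma card_edge_le2: "e \<in> face_edges f \<Longrightarrow> card e \<le> 2"
  unfolding face_edges_def by (auto simp: card_insert_if)

lemma double_count:
  assumes "finite A" "finite B" "\<And>a. a \<in> A \<Longrightarrow> S a \<subseteq> B"
  shows "(\<Sum>a\<in>A. card (S a)) = (\<Sum>b\<in>B. card {a\<in>A. b \<in> S a})"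
proof -
  have "(\<Sum>a\<in>A. card (S a)) = (\<Sum>a\<in>A. \<Sum>b\<in>B. if b \<in> S a then 1 else 0)"
  proof (rule sum.cong)
    fix a assume "a \<in> A"
    then have "S a = {b\<in>B. b \<in> S a}" using assms by auto
    then have "card (S a) = card {b\<in>B. b \<in> S a}" by simp
    also have "\<dots> = (\<Sum>b\<in>B. if b \<in> S a then 1 else 0)"
      using assms(2) by (simp add: sum.inter_filter[symmetric])
    finally show "card (S a) = (\<Sum>b\<in>B. if b \<in> S a then 1 else 0)" .
  qed simp
  also have "\<dots> = (\<Sum>b\<in>B. \<Sum>a\<in>A. if b \<in> S a then 1 else 0)"
    by (rule sum.swap)
  also have "\<dots> = (\<Sum>b\<in>B. card {a\<in>A. b \<in> S a})"
    using assms(1) by (simp add: sum.inter_filter[symmetric])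
  finally show ?thesis .
qed


lemma vertex_facts:
  assumes "face_cycle F v fs" "map length fs = [4,4,4,6]"
  shows "card {f\<in>F. v \<in> set f \<and> length f = 6} = 1"
    "card {f\<in>F. v \<in> set f \<and> length f = 4} = 3"
    "\<And>f. f \<in> F \<Longrightarrow> v \<in> set f \<Longrightarrow> length f = 4 \<or> length f = 6"
proof -
  have len: "length fs = 4" using arg_cong[OF assms(2), of length] by simp
  obtain a b c d where fs: "fs = [a,b,c,d]"
    using len by (auto simp: length_Suc_conv numeral_eq_Suc)
  have l: "length a = 4" "length b = 4" "length c = 4" "length d = 6"
    using assms(2) unfolding fs by simp_all
  have dis: "distinct [a,b,c,d]" using assms(1) unfolding fs face_cycle_def by blast
  have st: "set [a,b,c,d] = faces_at F v"
    using assms(1) unfolding fs face_cycle_def by blast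
  have mem: "(f \<in> F \<and> v \<in> set f) \<longleftrightarrow> (f = a \<or> f = b \<or> f = c \<or> f = d)" for f
  proof -
    have "f \<in> faces_at F v \<longleftrightarrow> f \<in> set [a,b,c,d]" using st by simp
    then show ?thesis unfolding faces_at_def by simp
  qed
  have "{f\<in>F. v \<in> set f \<and> length f = 6} = {f. (f = a \<or> f = b \<or> f = c \<or> f = d) \<and> length f = 6}"
    using mem by blast
  also have "\<dots> = {d}" using l by auto
  finally show "card {f\<in>F. v \<in> set f \<and> length f = 6} = 1" by simp
  have "{f\<in>F. v \<in> set f \<and> length f = 4} = {f. (f = a \<or> f = b \<or> f = c \<or> f = d) \<and> length f = 4}"
    using mem by blast
  also have "\<dots> = {a,b,c}" using l by auto
  finally show "card {f\<in>F. v \<in> set f \<and> length f = 4} = 3" using dis by simp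
  show "length f = 4 \<or> length f = 6" if "f \<in> F" "v \<in> set f" for f
  proof -
    have "f = a \<or> f = b \<or> f = c \<or> f = d" using mem[of f] that by blast
    then show ?thesis using l by auto
  qed
qed


theorem lemma4p4:
  fixes F :: "'a list set"
  shows "\<not> (semi_equivelar_4_3_6 F \<and> euler_char F = -1)"
proof
  assume A: "semi_equivelar_4_3_6 F \<and> euler_char F = -1"
  define V where "V = map_verts F"
  define E where "E = map_edges F"
  define Hx where "Hx = {f\<in>F. length f = 6}"
  define Qd where "Qd = {f\<in>F. length f = 4}"
  have pm: "polyhedral_map F" using A unfolding semi_equivelar_4_3_6_def by blast
  have finF: "finite F" using pm unfolding polyhedral_map_def by blast
  have poly: "\<And>f. f \<in> F \<Longrightarrow> distinct f \<and> length f \<ge> 3"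
    using pm unfolding polyhedral_map_def by blast
  have inter: "\<And>f g. f \<in> F \<Longrightarrow> g \<in> F \<Longrightarrow> f \<noteq> g \<Longrightarrow>
        set f \<inter> set g = {} \<or> card (set f \<inter> set g) = 1 \<or>
        set f \<inter> set g \<in> face_edges f \<inter> face_edges g"
    using pm unfolding polyhedral_map_def by blast
  have two: "\<And>e. e \<in> E \<Longrightarrow> card {f\<in>F. e \<in> face_edges f} = 2"
    using pm unfolding polyhedral_map_def E_def by blast
  have chi: "int (card V) - int (card E) + int (card F) = -1"
    using A unfolding euler_char_def V_def E_def by blast
  have vf: "\<exists>fs. face_cycle F v fs \<and> map length fs = [4, 4, 4, 6]" if "v \<in> V" for v
    using A that unfolding semi_equivelar_4_3_6_def V_def by blast
  have finV: "finite V" unfolding V_def map_verts_def using finF by blast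
  have finE: "finite E" unfolding E_def map_edges_def using finF finite_face_edges by blast
  have inV: "set f \<subseteq> V" if "f \<in> F" for f using that unfolding V_def map_verts_def by blast
  have inE: "face_edges f \<subseteq> E" if "f \<in> F" for f using that unfolding E_def map_edges_def by blast
  have hexv: "card {f\<in>Hx. v \<in> set f} = 1" if vV: "v \<in> V" for v
  proof -
    obtain fs where "face_cycle F v fs" "map length fs = [4, 4, 4, 6]" using vf[OF vV] by auto
    from vertex_facts(1)[OF this] show ?thesis unfolding Hx_def by (simp add: conj_commute conj_left_commute)
  qed
  have quadv: "card {f\<in>Qd. v \<in> set f} = 3" if vV: "v \<in> V" for v
  proof -
    obtain fs where "face_cycle F v fs" "map length fs = [4, 4, 4, 6]" using vf[OF vV] by auto
    from vertex_facts(2)[OF this] show ?thesis unfolding Qd_def by (simp add: conj_commute conj_left_commute)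
  qed
  have len46: "length f = 4 \<or> length f = 6" if fF: "f \<in> F" for f
  proof -
    have "length f \<ge> 3" using poly[OF fF] by blast
    then have "f ! 0 \<in> set f" by (intro nth_mem) linarith
    then have v: "f ! 0 \<in> V" using inV[OF fF] by blast
    obtain fs where "face_cycle F (f ! 0) fs" "map length fs = [4, 4, 4, 6]" using vf[OF v] by auto
    from vertex_facts(3)[OF this fF \<open>f ! 0 \<in> set f\<close>] show ?thesis .
  qed
  have FU: "F = Hx \<union> Qd" using len46 unfolding Hx_def Qd_def by blast
  have disj: "Hx \<inter> Qd = {}" unfolding Hx_def Qd_def by auto
  have finH: "finite Hx" "finite Qd" using finF unfolding Hx_def Qd_def by auto
  have cardF: "card F = card Hx + card Qd" using FU disj finH card_Un_disjoint by metis
  have "(\<Sum>f\<in>Hx. card (set f)) = (\<Sum>v\<in>V. card {f\<in>Hx. v \<in> set f})"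
    by (rule double_count) (use finH finV inV in \<open>auto simp: Hx_def\<close>)
  also have "\<dots> = card V" using hexv by simp
  finally have "(\<Sum>f\<in>Hx. card (set f)) = card V" .
  moreover have "(\<Sum>f\<in>Hx. card (set f)) = 6 * card Hx"
  proof -
    have "(\<Sum>f\<in>Hx. card (set f)) = (\<Sum>f\<in>Hx. 6)"
      using poly by (intro sum.cong) (auto simp: Hx_def distinct_card)
    then show ?thesis by simp
  qed
  ultimately have eH: "6 * card Hx = card V" by simp
  have "(\<Sum>f\<in>Qd. card (set f)) = (\<Sum>v\<in>V. card {f\<in>Qd. v \<in> set f})"
    by (rule double_count) (use finH finV inV in \<open>auto simp: Qd_def\<close>)
  also have "\<dots> = 3 * card V" using quadv by simp
  finally have "(\<Sum>f\<in>Qd. card (set f)) = 3 * card V" .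
  moreover have "(\<Sum>f\<in>Qd. card (set f)) = 4 * card Qd"
  proof -
    have "(\<Sum>f\<in>Qd. card (set f)) = (\<Sum>f\<in>Qd. 4)"
      using poly by (intro sum.cong) (auto simp: Qd_def distinct_card)
    then show ?thesis by simp
  qed
  ultimately have eQ: "4 * card Qd = 3 * card V" by simp
  have "(\<Sum>f\<in>F. card (face_edges f)) = (\<Sum>e\<in>E. card {f\<in>F. e \<in> face_edges f})"
    by (rule double_count) (use finF finE inE in auto)
  also have "\<dots> = 2 * card E" using two by simp
  finally have s1: "(\<Sum>f\<in>F. card (face_edges f)) = 2 * card E" .
  have "(\<Sum>f\<in>F. card (face_edges f)) = (\<Sum>f\<in>Hx. card (face_edges f)) + (\<Sum>f\<in>Qd. card (face_edges f))"
    using FU disj finH sum.union_disjoint by metis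
  also have "(\<Sum>f\<in>Hx. card (face_edges f)) = (\<Sum>f\<in>Hx. 6)"
    proof (rule sum.cong)
    fix f assume "f \<in> Hx"
    then have "f \<in> F" "length f = 6" unfolding Hx_def by auto
    then show "card (face_edges f) = 6" using poly card_face_edges by metis
  qed simp
  also have "(\<Sum>f\<in>Qd. card (face_edges f)) = (\<Sum>f\<in>Qd. 4)"
    proof (rule sum.cong)
    fix f assume "f \<in> Qd"
    then have "f \<in> F" "length f = 4" unfolding Qd_def by auto
    then show "card (face_edges f) = 4" using poly card_face_edges by metis
  qed simp
  finally have eE: "2 * card E = 6 * card Hx + 4 * card Qd" using s1 by simp
  have h2: "card Hx = 2" and q9: "card Qd = 9" using chi cardF eH eQ eE by linarith+
  obtain H1 H2 where Hx2: "Hx = {H1, H2}" "H1 \<noteq> H2" using h2 card_2_iff by metis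
  have H1F: "H1 \<in> F" "length H1 = 6" using Hx2 unfolding Hx_def by auto
  have cover: "v \<in> set H1 \<or> v \<in> set H2" if "v \<in> V" for v
  proof -
    have "{f\<in>Hx. v \<in> set f} \<noteq> {}" using hexv[OF that] by (metis card.empty zero_neq_one)
    then show ?thesis using Hx2 by auto
  qed
  have key: "set Q \<inter> set H1 \<in> face_edges Q \<inter> face_edges H1" if Q: "Q \<in> Qd" for Q
  proof -
    have QF: "Q \<in> F" "length Q = 4" using Q unfolding Qd_def by auto
    have H2F: "H2 \<in> F" "length H2 = 6" using Hx2 unfolding Hx_def by auto
    have c2: "card (set Q \<inter> set H) \<le> 2" and
      c2': "set Q \<inter> set H \<notin> face_edges Q \<inter> face_edges H \<Longrightarrow> card (set Q \<inter> set H) \<le> 1"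
      if "H \<in> F" "length H = 6" for H
    proof -
      have "Q \<noteq> H" using that QF by auto
      from inter[OF QF(1) that(1) this]
      have d: "set Q \<inter> set H = {} \<or> card (set Q \<inter> set H) = 1 \<or>
        set Q \<inter> set H \<in> face_edges Q \<inter> face_edges H" .
      then show "card (set Q \<inter> set H) \<le> 2" using card_edge_le2 by fastforce
      show "set Q \<inter> set H \<notin> face_edges Q \<inter> face_edges H \<Longrightarrow> card (set Q \<inter> set H) \<le> 1"
        using d by fastforce
    qed
    have "set Q = (set Q \<inter> set H1) \<union> (set Q \<inter> set H2)" using cover inV[OF QF(1)] by blast
    then have "card (set Q) \<le> card (set Q \<inter> set H1) + card (set Q \<inter> set H2)"
      by (metis card_Un_le)
    moreover have "card (set Q) = 4" using poly[OF QF(1)] QF(2) distinct_card by metis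
    ultimately have "card (set Q \<inter> set H1) \<ge> 2" using c2[OF H2F] by linarith
    then show "set Q \<inter> set H1 \<in> face_edges Q \<inter> face_edges H1" using c2'[OF H1F] by linarith
  qed
  have "inj_on (\<lambda>Q. set Q \<inter> set H1) Qd"
  proof (rule inj_onI)
    fix Q Q' assume Q: "Q \<in> Qd" and Q': "Q' \<in> Qd" and eq: "set Q \<inter> set H1 = set Q' \<inter> set H1"
    show "Q = Q'"
    proof (rule ccontr)
      assume ne: "Q \<noteq> Q'"
      define e where "e = set Q \<inter> set H1"
      have eH: "e \<in> face_edges H1" using key[OF Q] e_def by simp
      have eQ: "e \<in> face_edges Q" using key[OF Q] e_def by simp
      have eQ': "e \<in> face_edges Q'" using key[OF Q'] e_def eq by simp
      have QF: "Q \<in> F" "length Q = 4" "Q' \<in> F" "length Q' = 4" using Q Q' unfolding Qd_def by auto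
      have eE: "e \<in> E" using eH inE[OF H1F(1)] by blast
      have sub: "{H1, Q, Q'} \<subseteq> {f\<in>F. e \<in> face_edges f}" using eH eQ eQ' QF H1F by auto
      have n1: "H1 \<noteq> Q" "H1 \<noteq> Q'" using QF H1F by auto
      have "card {H1, Q, Q'} = 3" using ne n1 by (simp add: card_insert_if)
      moreover have "card {H1, Q, Q'} \<le> card {f\<in>F. e \<in> face_edges f}"
        using sub finF by (intro card_mono) auto
      ultimately show False using two[OF eE] by linarith
    qed
  qed
  then have "card Qd \<le> card (face_edges H1)"
    using key by (intro card_inj_on_le) (auto simp: finite_face_edges)
  also have "\<dots> \<le> 6" using card_face_edges_le[of H1] H1F by simp
  finally show False using q9 by simp
qed
end
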